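(* Let $k\geq 1$ be an integer and $\lambda>0$ a real number. Let $f_k(x;\lambda)$ denote the probability mass function of the Poisson distribution of order $k$ with parameter $\lambda$. Then every mode $m_{k,\lambda}$ of $f_k(\cdot;\lambda)$ (i.e., every nonnegative integer $x$ at which $f_k(x;\lambda)$ attains its maximum over $x\in\{0,1,2,\dots\}$) satisfies \[ \left\lfloor \frac{\lambda k(k+1)}{2}\right\rfloor - \frac{k(k+1)}{2} + 1 - \delta_{k,1} \;\leq\; m_{k,\lambda} \;\leq\; \left\lfloor \frac{\lambda k(k+1)}{2}\right\rfloor, \] where $\delta_{k,1}$ is the Kronecker delta ($\delta_{k,1}=1$ if $k=1$ and $0$ otherwise).
   Context: For a positive integer $k$ and real $\lambda>0$, the Poisson distribution of order $k$ with parameter $\lambda$ is the distribution on $\{0,1,2,\dots\}$ with probability mass function \[ f_k(x;\lambda)=\sum e^{-k\lambda}\frac{\lambda^{x_1+x_2+\cdots+x_k}}{x_1!\,x_2!\cdots x_k!},\qquad x=0,1,2,\dots, \] where the sum is over all $k$-tuples $(x_1,\dots,x_k)$ of nonnegative integers with $x_1+2x_2+\cdots+kx_k=x$. Equivalently, its probability generating function is $\sum_{x\ge0}f_k(x;\lambda)s^x=e^{\lambda(-k+s+s^2+\cdots+s^k)}$. For $k=1$ it is the ordinary Poisson distribution. $\lfloor u\rfloor$ denotes the greatest integer not exceeding $u$. *)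

theory Defs
  imports "HOL-Analysis.Analysis"
begin

text \<open>k-tuples (x_1,...,x_k) of nonnegative integers are represented as functions
  nat => nat that vanish outside {1..k}.\<close>
definition order_k_tuples :: "nat \<Rightarrow> nat \<Rightarrow> (nat \<Rightarrow> nat) set" where
  "order_k_tuples k x =
     {xs. (\<forall>i. i \<notin> {1..k} \<longrightarrow> xs i = 0) \<and> (\<Sum>i=1..k. i * xs i) = x}"

definition poisson_k_pmf :: "nat \<Rightarrow> real \<Rightarrow> nat \<Rightarrow> real" where
  "poisson_k_pmf k lam x =
     (\<Sum>xs\<in>order_k_tuples k x.
        exp (- real k * lam) * lam ^ (\<Sum>i=1..k. xs i) / (\<Prod>i=1..k. fact (xs i)))"

definition is_mode_poisson_k :: "nat \<Rightarrow> real \<Rightarrow> nat \<Rightarrow> bool" where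
  "is_mode_poisson_k k lam m \<longleftrightarrow> (\<forall>y. poisson_k_pmf k lam y \<le> poisson_k_pmf k lam m)"

end

theory Submission
  imports Defs
begin

definition hk :: "nat \<Rightarrow> real \<Rightarrow> nat \<Rightarrow> real" where
  "hk k lam x = (\<Sum>xs\<in>order_k_tuples k x. lam ^ (\<Sum>i=1..k. xs i) / (\<Prod>i=1..k. fact (xs i)))"

lemma tuples_bound:
  assumes "xs \<in> order_k_tuples k x"
  shows "xs j \<le> x"
proof (cases "j \<in> {1..k}")
  case True
  have "j * xs j \<le> (\<Sum>i=1..k. i * xs i)"
    by (rule member_le_sum[OF True]) auto
  also have "\<dots> = x" using assms by (simp add: order_k_tuples_def)
  finally have "j * xs j \<le> x" .
  moreover have "xs j \<le> j * xs j" using True by simp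
  ultimately show ?thesis by linarith
next
  case False
  then show ?thesis using assms by (simp add: order_k_tuples_def)
qed

lemma tuples_finite: "finite (order_k_tuples k x)"
proof -
  have "order_k_tuples k x \<subseteq> {f. \<forall>j. (j \<in> {1..k} \<longrightarrow> f j \<in> {0..x}) \<and> (j \<notin> {1..k} \<longrightarrow> f j = 0)}"
    using tuples_bound by (auto simp: order_k_tuples_def)
  moreover have "finite {f. \<forall>j. (j \<in> {1..k} \<longrightarrow> f j \<in> {0..x}) \<and> (j \<notin> {1..k} \<longrightarrow> f j = (0::nat))}"
    by (rule finite_set_of_finite_funs) auto
  ultimately show ?thesis by (rule finite_subset)
qed

lemma pmf_eq: "poisson_k_pmf k lam x = exp (- real k * lam) * hk k lam x"
  unfolding poisson_k_pmf_def hk_def by (simp add: sum_distrib_left)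

lemma hk_nonneg: "lam > 0 \<Longrightarrow> hk k lam x \<ge> 0"
  unfolding hk_def by (intro sum_nonneg divide_nonneg_pos) (auto intro!: prod_pos)

lemma hk_pos: assumes "k \<ge> 1" "lam > 0" shows "hk k lam x > 0"
proof -
  let ?z = "(\<lambda>j. if j = 1 then x else 0) :: nat \<Rightarrow> nat"
  have "(\<Sum>i=1..k. i * ?z i) = (\<Sum>i=1..k. if i = 1 then x else 0)"
    by (rule sum.cong) auto
  also have "\<dots> = x" using assms by simp
  finally have "?z \<in> order_k_tuples k x" by (auto simp: order_k_tuples_def)
  then show ?thesis unfolding hk_def
    using assms by (intro sum_pos2[OF tuples_finite]) (auto intro!: divide_nonneg_pos divide_pos_pos prod_pos)
qed

definition wk :: "nat \<Rightarrow> real \<Rightarrow> (nat \<Rightarrow> nat) \<Rightarrow> real" where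
  "wk k lam xs = lam ^ (\<Sum>i=1..k. xs i) / (\<Prod>i=1..k. fact (xs i))"

lemma hk_wk: "hk k lam x = (\<Sum>xs\<in>order_k_tuples k x. wk k lam xs)"
  unfolding hk_def wk_def ..

lemma sum_upd:
  fixes c :: "nat \<Rightarrow> 'a \<Rightarrow> 'b::comm_monoid_add"
  assumes "finite A" "i \<in> A"
  shows "(\<Sum>j\<in>A. c j ((ys(i:=v)) j)) + c i (ys i) = (\<Sum>j\<in>A. c j (ys j)) + c i v"
proof -
  have a: "(\<Sum>j\<in>A. c j ((ys(i:=v)) j)) = c i v + (\<Sum>j\<in>A-{i}. c j ((ys(i:=v)) j))"
    using sum.remove[OF assms, of "\<lambda>j. c j ((ys(i:=v)) j)"] by simp
  have b: "(\<Sum>j\<in>A. c j (ys j)) = c i (ys i) + (\<Sum>j\<in>A-{i}. c j (ys j))"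
    using sum.remove[OF assms] .
  have "(\<Sum>j\<in>A-{i}. c j ((ys(i:=v)) j)) = (\<Sum>j\<in>A-{i}. c j (ys j))"
    by (rule sum.cong) auto
  then show ?thesis using a b by (simp add: ac_simps)
qed

lemma prod_upd:
  fixes c :: "'a \<Rightarrow> 'b::comm_monoid_mult"
  assumes "finite A" "i \<in> A"
  shows "(\<Prod>j\<in>A. c ((ys(i:=v)) j)) * c (ys i) = (\<Prod>j\<in>A. c (ys j)) * c v"
proof -
  have a: "(\<Prod>j\<in>A. c ((ys(i:=v)) j)) = c v * (\<Prod>j\<in>A-{i}. c ((ys(i:=v)) j))"
    using prod.remove[OF assms, of "\<lambda>j. c ((ys(i:=v)) j)"] by simp
  have b: "(\<Prod>j\<in>A. c (ys j)) = c (ys i) * (\<Prod>j\<in>A-{i}. c (ys j))"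
    using prod.remove[OF assms] .
  have "(\<Prod>j\<in>A-{i}. c ((ys(i:=v)) j)) = (\<Prod>j\<in>A-{i}. c (ys j))"
    by (rule prod.cong) auto
  then show ?thesis using a b by (simp add: ac_simps)
qed

lemma shift_sum:
  assumes i: "i \<in> {1..k}" and ix: "i \<le> x"
  shows "(\<Sum>xs\<in>order_k_tuples k x. real (xs i) * wk k lam xs) = lam * hk k lam (x - i)"
proof -
  define \<phi> where "\<phi> = (\<lambda>ys::nat\<Rightarrow>nat. ys(i := Suc (ys i)))"
  have inj: "inj_on \<phi> (order_k_tuples k (x - i))"
  proof (rule inj_onI)
    fix ys zs assume "\<phi> ys = \<phi> zs"
    then have "\<And>j. (\<phi> ys) j = (\<phi> zs) j" by simp
    note eq = this
    have "ys j = zs j" for j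
    proof (cases "j = i")
      case True with eq[of i] show ?thesis by (simp add: \<phi>_def)
    next
      case False with eq[of j] show ?thesis by (simp add: \<phi>_def)
    qed
    then show "ys = zs" by auto
  qed
  have fin: "finite {1..k::nat}" by simp
  have img: "\<phi> ` order_k_tuples k (x - i) = {xs\<in>order_k_tuples k x. xs i \<noteq> 0}"
  proof
    show "\<phi> ` order_k_tuples k (x - i) \<subseteq> {xs\<in>order_k_tuples k x. xs i \<noteq> 0}"
    proof
      fix xs assume "xs \<in> \<phi> ` order_k_tuples k (x - i)"
      then obtain ys where ys: "ys \<in> order_k_tuples k (x - i)" and xs: "xs = \<phi> ys" by auto
      have "(\<Sum>j=1..k. j * (ys(i:=Suc (ys i))) j) + i * ys i = (\<Sum>j=1..k. j * ys j) + i * Suc (ys i)"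
        using sum_upd[OF fin i, of "\<lambda>j v. j * v"] by simp
      then have "(\<Sum>j=1..k. j * xs j) = x" using ys ix unfolding xs \<phi>_def
        by (simp add: order_k_tuples_def)
      moreover have "\<forall>j. j \<notin> {1..k} \<longrightarrow> xs j = 0" using ys i unfolding xs \<phi>_def
        by (auto simp: order_k_tuples_def)
      ultimately show "xs \<in> {xs\<in>order_k_tuples k x. xs i \<noteq> 0}"
        unfolding order_k_tuples_def by (simp add: xs \<phi>_def)
    qed
  next
    show "{xs\<in>order_k_tuples k x. xs i \<noteq> 0} \<subseteq> \<phi> ` order_k_tuples k (x - i)"
    proof
      fix xs assume xs: "xs \<in> {xs\<in>order_k_tuples k x. xs i \<noteq> 0}"
      define ys where "ys = xs(i := xs i - 1)"
      have e: "\<phi> ys = xs" using xs unfolding ys_def \<phi>_def by auto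
      have "(\<Sum>j=1..k. j * (xs(i:=xs i - 1)) j) + i * xs i = (\<Sum>j=1..k. j * xs j) + i * (xs i - 1)"
        using sum_upd[OF fin i, of "\<lambda>j v. j * v"] by simp
      moreover have "i * xs i = i * (xs i - 1) + i"
      proof -
        have "xs i \<noteq> 0" using xs by simp
        then show ?thesis by (cases "xs i") auto
      qed
      moreover have "(\<Sum>j=1..k. j * xs j) = x" using xs by (simp add: order_k_tuples_def)
      ultimately have "(\<Sum>j=1..k. j * ys j) = x - i" unfolding ys_def by linarith
      moreover have "\<forall>j. j \<notin> {1..k} \<longrightarrow> ys j = 0" using xs i unfolding ys_def
        by (auto simp: order_k_tuples_def)
      ultimately have "ys \<in> order_k_tuples k (x - i)" by (simp add: order_k_tuples_def)
      then show "xs \<in> \<phi> ` order_k_tuples k (x - i)" using e by force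
    qed
  qed
  have pw: "real ((\<phi> ys) i) * wk k lam (\<phi> ys) = lam * wk k lam ys" for ys
  proof -
    have s1: "(\<Sum>j=1..k. (ys(i:=Suc (ys i))) j) + ys i = (\<Sum>j=1..k. ys j) + Suc (ys i)"
      using sum_upd[OF fin i, where c="\<lambda>j v. v" and ys=ys and v="Suc (ys i)"] by simp
    have p1: "(\<Prod>j=1..k. (fact ((ys(i:=Suc (ys i))) j) :: real)) * fact (ys i)
        = (\<Prod>j=1..k. fact (ys j)) * fact (Suc (ys i))"
      using prod_upd[OF fin i, where c="\<lambda>v. fact v :: real" and ys=ys and v="Suc (ys i)"] by simp
    define P where "P = (\<Prod>j=1..k. (fact (ys j) :: real))"
    define P' where "P' = (\<Prod>j=1..k. (fact ((ys(i:=Suc (ys i))) j) :: real))"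
    have "fact (ys i) > (0::real)" by simp
    then have pp: "P' = P * real (Suc (ys i))" using p1 unfolding P_def P'_def
      by (simp add: fact_Suc mult_ac)
    have Ppos: "P > 0" unfolding P_def by (intro prod_pos) auto
    have ss: "(\<Sum>j=1..k. (ys(i:=Suc (ys i))) j) = Suc (\<Sum>j=1..k. ys j)" using s1 by simp
    define S where "S = (\<Sum>j=1..k. ys j)"
    have w1: "wk k lam (\<phi> ys) = lam ^ Suc S / P'"
      unfolding wk_def \<phi>_def P'_def S_def ss ..
    have w2: "wk k lam ys = lam ^ S / P" unfolding wk_def P_def S_def ..
    have pi: "real ((\<phi> ys) i) = real (Suc (ys i))" by (simp add: \<phi>_def)
    have nz: "real (Suc (ys i)) \<noteq> 0" "P \<noteq> 0" using Ppos by auto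
    have "real (Suc (ys i)) * (lam ^ Suc S / (P * real (Suc (ys i)))) = lam * (lam ^ S / P)"
      using nz by (simp add: field_simps del: of_nat_Suc)
    then show ?thesis unfolding w1 w2 pi pp .
  qed
  have "(\<Sum>xs\<in>order_k_tuples k x. real (xs i) * wk k lam xs)
      = (\<Sum>xs\<in>{xs\<in>order_k_tuples k x. xs i \<noteq> 0}. real (xs i) * wk k lam xs)"
    by (rule sum.mono_neutral_right) (auto simp: tuples_finite)
  also have "\<dots> = (\<Sum>ys\<in>order_k_tuples k (x - i). real ((\<phi> ys) i) * wk k lam (\<phi> ys))"
    unfolding img[symmetric] by (rule sum.reindex[OF inj, unfolded comp_def])
  also have "\<dots> = (\<Sum>ys\<in>order_k_tuples k (x - i). lam * wk k lam ys)"
    using pw by simp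
  also have "\<dots> = lam * hk k lam (x - i)" by (simp add: hk_wk sum_distrib_left)
  finally show ?thesis .
qed

lemma tuples_big_zero:
  assumes "xs \<in> order_k_tuples k x" "j \<in> {1..k}" "x < j"
  shows "xs j = 0"
proof -
  have "j * xs j \<le> (\<Sum>i=1..k. i * xs i)"
    by (rule member_le_sum[OF assms(2)]) auto
  also have "\<dots> = x" using assms by (simp add: order_k_tuples_def)
  finally have "j * xs j \<le> x" .
  show ?thesis
  proof (rule ccontr)
    assume "xs j \<noteq> 0"
    then have "j \<le> j * xs j" by simp
    then show False using \<open>j * xs j \<le> x\<close> assms(3) by linarith
  qed
qed

definition Fk :: "nat \<Rightarrow> real \<Rightarrow> int \<Rightarrow> real" where
  "Fk k lam y = (if y < 0 then 0 else hk k lam (nat y))"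

lemma Fk_nat[simp]: "Fk k lam (int x) = hk k lam x"
  by (simp add: Fk_def)

lemma recur:
  "real x * hk k lam x = lam * (\<Sum>j=1..k. real j * Fk k lam (int x - int j))"
proof -
  have "real x * hk k lam x = (\<Sum>xs\<in>order_k_tuples k x. real x * wk k lam xs)"
    by (simp add: hk_wk sum_distrib_left)
  also have "\<dots> = (\<Sum>xs\<in>order_k_tuples k x. (\<Sum>j=1..k. real j * (real (xs j) * wk k lam xs)))"
  proof (rule sum.cong[OF refl])
    fix xs assume "xs \<in> order_k_tuples k x"
    then have "real x = real (\<Sum>j=1..k. j * xs j)" by (simp add: order_k_tuples_def)
    also have "\<dots> = (\<Sum>j=1..k. real j * real (xs j))" by simp
    finally have "real x * wk k lam xs = (\<Sum>j=1..k. real j * real (xs j)) * wk k lam xs" by simp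
    also have "\<dots> = (\<Sum>j=1..k. real j * real (xs j) * wk k lam xs)" by (rule sum_distrib_right)
    finally show "real x * wk k lam xs = (\<Sum>j=1..k. real j * (real (xs j) * wk k lam xs))"
      by (simp add: mult.assoc)
  qed
  also have "\<dots> = (\<Sum>j=1..k. real j * (\<Sum>xs\<in>order_k_tuples k x. real (xs j) * wk k lam xs))"
    by (subst sum.swap) (simp add: sum_distrib_left)
  also have "\<dots> = (\<Sum>j=1..k. real j * (lam * Fk k lam (int x - int j)))"
  proof (rule sum.cong[OF refl])
    fix j assume j: "j \<in> {1..k}"
    show "real j * (\<Sum>xs\<in>order_k_tuples k x. real (xs j) * wk k lam xs) = real j * (lam * Fk k lam (int x - int j))"
    proof (cases "j \<le> x")
      case True
      have n: "nat (int x - int j) = x - j" using True by (simp add: nat_diff_distrib)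
      have e: "Fk k lam (int x - int j) = hk k lam (x - j)" using True by (simp add: Fk_def n)
      show ?thesis unfolding e shift_sum[OF j True, of lam] ..
    next
      case False
      then have "(\<Sum>xs\<in>order_k_tuples k x. real (xs j) * wk k lam xs) = 0"
        using tuples_big_zero[OF _ j] by (intro sum.neutral) auto
      moreover have "Fk k lam (int x - int j) = 0" using False by (simp add: Fk_def)
      ultimately show ?thesis by simp
    qed
  qed
  also have "\<dots> = (\<Sum>j=1..k. lam * (real j * Fk k lam (int x - int j)))"
    by (rule sum.cong) (simp_all add: mult.left_commute)
  also have "\<dots> = lam * (\<Sum>j=1..k. real j * Fk k lam (int x - int j))"
    by (simp add: sum_distrib_left)
  finally show ?thesis .
qed

lemma sum_id_real: "(\<Sum>j=1..k. real j) = real k * (real k + 1) / 2"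
  by (induction k) (auto simp: field_simps)

lemma telescope:
  fixes F :: "int \<Rightarrow> real"
  shows "(\<Sum>j=1..Suc n. real j * (F (x + 1 - int j) - F (x - int j)))
       = F x + (\<Sum>j\<in>{1..<Suc n}. F (x - int j)) - real (Suc n) * F (x - int (Suc n))"
proof (induction n)
  case 0
  then show ?case by simp
next
  case (Suc n)
  have e: "x + 1 - int (Suc (Suc n)) = x - int (Suc n)" by simp
  show ?case
    using Suc by (simp add: e algebra_simps)
qed

lemma incr_abs:
  fixes h :: "nat \<Rightarrow> real" and F :: "int \<Rightarrow> real"
  assumes F_def: "\<And>y. F y = (if y < 0 then 0 else h (nat y))"
    and rec: "\<And>x. real x * h x = lam * (\<Sum>j=1..k. real j * F (int x - int j))"
    and pos: "\<And>x. h x > 0" and k1: "k \<ge> 1" and lam: "lam > 0"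
    and K: "K = real k * (real k + 1) / 2"
  shows "real n < lam * K - K \<or> (k \<ge> 2 \<and> n \<ge> 1 \<and> real n \<le> lam * K - K) \<Longrightarrow> h n < h (Suc n)"
proof (induction n rule: less_induct)
  case (less n)
  have Kpos: "K > 0"
  proof -
    have "real k * (real k + 1) > 0" using k1 by simp
    then show ?thesis using K by simp
  qed
  have nle: "real n \<le> lam * K - K" using less.prems by auto
  have lam1: "lam \<ge> 1"
  proof -
    have "0 \<le> (lam - 1) * K" using nle by (simp add: algebra_simps)
    then show ?thesis using Kpos by (simp add: zero_le_mult_iff)
  qed
  have IH: "h j < h (Suc j)" if "j < n" for j
    using less.IH[OF that] that nle by auto
  have mono: "a < b \<Longrightarrow> b \<le> n \<Longrightarrow> h a < h b" for a b
  proof (induction b)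
    case 0 then show ?case by simp
  next
    case (Suc b)
    show ?case
    proof (cases "a = b")
      case True then show ?thesis using IH Suc.prems by simp
    next
      case False
      then have "h a < h b" using Suc by simp
      also have "h b < h (Suc b)" using IH Suc.prems by simp
      finally show ?thesis .
    qed
  qed
  have Fnn: "F y \<ge> 0" for y using pos[of "nat y"] by (simp add: F_def less_imp_le)
  have Fpos: "0 \<le> y \<Longrightarrow> F y > 0" for y using pos[of "nat y"] by (simp add: F_def)
  have Fstrict: "y < z \<Longrightarrow> 0 \<le> z \<Longrightarrow> z \<le> int n \<Longrightarrow> F y < F z" for y z
  proof (cases "y < 0")
    case True
    assume "0 \<le> z"
    then show ?thesis using True Fpos[of z] by (simp add: F_def)
  next
    case False
    assume "y < z" "z \<le> int n"
    then show ?thesis using False mono[of "nat y" "nat z"] by (simp add: F_def)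
  qed
  have Fle: "y \<le> z \<Longrightarrow> z \<le> int n \<Longrightarrow> F y \<le> F z" for y z
  proof (cases "z < 0")
    case True
    assume "y \<le> z" then show ?thesis using True by (simp add: F_def)
  next
    case False
    assume "y \<le> z" "z \<le> int n"
    then show ?thesis using False Fstrict[of y z] by (cases "y = z") auto
  qed
  have hF: "h m = F (int m)" for m by (simp add: F_def)
  show ?case
  proof (cases "n = 0")
    case True
    then have "0 < lam * K - K" using less.prems by auto
    then have lg: "lam > 1" using Kpos by (simp add: algebra_simps)
    have fin: "finite {1..k}" by simp
    have "(\<Sum>j=1..k. real j * F (int 1 - int j)) = real 1 * F (int 1 - int 1) + (\<Sum>j\<in>{1..k}-{1}. real j * F (int 1 - int j))"
      by (rule sum.remove[OF fin]) (use k1 in simp)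
    also have "(\<Sum>j\<in>{1..k}-{1}. real j * F (int 1 - int j)) = 0"
      by (rule sum.neutral) (auto simp: F_def)
    finally have "(\<Sum>j=1..k. real j * F (int 1 - int j)) = h 0" by (simp add: F_def)
    then have "h 1 = lam * h 0" using rec[of 1] by simp
    then show ?thesis using True lg pos[of 0] by simp
  next
    case False
    then have n1: "n \<ge> 1" by simp
    define a where "a = F (int n - int k)"
    define A where "A j = F (int n - int j) - a" for j
    define S0 where "S0 = (\<Sum>j=1..k. real j * F (int n - int j))"
    define S1 where "S1 = (\<Sum>j=1..k. real j * F (int n + 1 - int j))"
    define TS where "TS = F (int n) + (\<Sum>j\<in>{1..<k}. F (int n - int j)) - real k * a"
    have R1: "real n * h n = lam * S0" using rec[of n] by (simp add: S0_def)
    have R2: "real (Suc n) * h (Suc n) = lam * S1" using rec[of "Suc n"] by (simp add: S1_def add.commute)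
    have tel: "S1 - S0 = TS"
    proof -
      obtain k' where k': "k = Suc k'" using k1 by (cases k) auto
      have "S1 - S0 = (\<Sum>j=1..k. real j * (F (int n + 1 - int j) - F (int n - int j)))"
        by (simp add: S0_def S1_def sum_subtractf right_diff_distrib)
      also have "\<dots> = TS" unfolding TS_def a_def k' by (rule telescope)
      finally show ?thesis .
    qed
    have Ann: "A j \<ge> 0" if "j \<in> {1..k}" for j
      using Fle[of "int n - int k" "int n - int j"] that by (simp add: A_def a_def)
    have ann: "a \<ge> 0" by (simp add: a_def Fnn)
    have S0e: "S0 = (\<Sum>j=1..k. real j * A j) + K * a"
    proof -
      have "S0 = (\<Sum>j=1..k. real j * A j + real j * a)"
        unfolding S0_def by (rule sum.cong) (auto simp: A_def algebra_simps)
      also have "\<dots> = (\<Sum>j=1..k. real j * A j) + (\<Sum>j=1..k. real j) * a"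
        by (simp add: sum.distrib sum_distrib_right)
      moreover have "(\<Sum>j=1..k. real j) = K" using K sum_id_real[of k] by simp
      ultimately show ?thesis by simp
    qed
    have Se: "(\<Sum>j\<in>{1..<k}. F (int n - int j)) = (\<Sum>j\<in>{1..<k}. A j) + (real k - 1) * a"
    proof -
      have "(\<Sum>j\<in>{1..<k}. F (int n - int j)) = (\<Sum>j\<in>{1..<k}. A j + a)"
        by (rule sum.cong) (auto simp: A_def)
      also have "\<dots> = (\<Sum>j\<in>{1..<k}. A j) + real (k - 1) * a"
        by (simp add: sum.distrib)
      finally show ?thesis using k1 by (simp add: of_nat_diff)
    qed
    have Fn: "real n * F (int n) = lam * S0" using R1 hF by simp
    have E: "real n * TS - S0 = (lam - 1) * (\<Sum>j=1..k. real j * A j)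
        + real n * (\<Sum>j\<in>{1..<k}. A j) + a * ((lam - 1) * K - real n)"
      unfolding TS_def Se using Fn S0e by (simp add: algebra_simps)
    have P: "(lam - 1) * (\<Sum>j=1..k. real j * A j) \<ge> 0"
      using lam1 Ann by (intro mult_nonneg_nonneg sum_nonneg) auto
    have Q: "real n * (\<Sum>j\<in>{1..<k}. A j) \<ge> 0"
      using Ann by (intro mult_nonneg_nonneg sum_nonneg) auto
    have R: "a * ((lam - 1) * K - real n) \<ge> 0"
      using ann nle by (intro mult_nonneg_nonneg) (auto simp: algebra_simps)
    have strict: "real n * (\<Sum>j\<in>{1..<k}. A j) > 0 \<or> a * ((lam - 1) * K - real n) > 0"
    proof (cases "k \<ge> 2")
      case True
      have "A 1 > 0" using Fstrict[of "int n - int k" "int n - 1"] True n1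
        by (simp add: A_def a_def)
      moreover have "A 1 \<le> (\<Sum>j\<in>{1..<k}. A j)"
        using True Ann by (intro member_le_sum) auto
      ultimately have "(\<Sum>j\<in>{1..<k}. A j) > 0" by linarith
      then show ?thesis using n1 by simp
    next
      case False
      then have "real n < lam * K - K" using less.prems by auto
      moreover have "a > 0" unfolding a_def using False k1 n1 by (intro Fpos) simp
      ultimately have "a * ((lam - 1) * K - real n) > 0"
        by (intro mult_pos_pos) (auto simp: algebra_simps)
      then show ?thesis by simp
    qed
    have key: "real n * TS > S0" using E P Q R strict by linarith
    have "lam * TS > h n"
    proof -
      have "real n * (lam * TS) > real n * h n" using key lam R1
        by (simp add: mult.left_commute)
      then show ?thesis using n1 by (simp add: mult_less_cancel_left)
    qed
    then have "real (Suc n) * h (Suc n) > real (Suc n) * h n"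
      using R1 R2 tel by (simp add: algebra_simps)
    then show ?thesis by (simp add: mult_less_cancel_left del: of_nat_Suc)
  qed
qed


lemma Fk_le_max:
  assumes "\<And>y. hk k lam y \<le> hk k lam m" "lam > 0"
  shows "Fk k lam z \<le> hk k lam m"
  using assms hk_nonneg[of lam k m] by (simp add: Fk_def)

theorem theorem2p1:
  fixes k :: nat and lam :: real and m :: nat
  assumes "k \<ge> 1" and "lam > 0" and "is_mode_poisson_k k lam m"
  shows "\<lfloor>lam * real (k * (k + 1)) / 2\<rfloor> - int (k * (k + 1) div 2) + 1 - (if k = 1 then 1 else 0)
           \<le> int m
         \<and> int m \<le> \<lfloor>lam * real (k * (k + 1)) / 2\<rfloor>"
proof -
  note k1 = assms(1) and lam = assms(2)
  define K where "K = real k * (real k + 1) / 2"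
  have lamK: "lam * real (k * (k + 1)) / 2 = lam * K" by (simp add: K_def algebra_simps)
  have ev: "even (k * (k + 1))" by simp
  have Kint: "real (k * (k + 1) div 2) = K"
  proof -
    have "k * (k + 1) = 2 * (k * (k + 1) div 2)" using ev by simp
    then have "real (k * (k + 1)) = 2 * real (k * (k + 1) div 2)"
      by (metis of_nat_mult of_nat_numeral)
    then show ?thesis by (simp add: K_def algebra_simps)
  qed
  have Kpos: "K > 0" using k1 by (simp add: K_def)
  have hmode: "hk k lam y \<le> hk k lam m" for y
    using assms(3) unfolding is_mode_poisson_k_def pmf_eq by simp
  have hpos: "hk k lam y > 0" for y using hk_pos[OF k1 lam] .
  have Fle: "Fk k lam z \<le> hk k lam m" for z using Fk_le_max[OF hmode lam] .
  have Fnn: "Fk k lam z \<ge> 0" for z using hk_nonneg[OF lam] by (simp add: Fk_def)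
  have up: "real m \<le> lam * K"
  proof -
    have "real m * hk k lam m = lam * (\<Sum>j=1..k. real j * Fk k lam (int m - int j))" by (rule recur)
    also have "\<dots> \<le> lam * (\<Sum>j=1..k. real j * hk k lam m)"
      using lam Fle by (intro mult_left_mono sum_mono mult_left_mono) auto
    also have "\<dots> = lam * ((\<Sum>j=1..k. real j) * hk k lam m)"
      by (simp add: sum_distrib_right)
    also have "(\<Sum>j=1..k. real j) = K" using sum_id_real[of k] by (simp add: K_def)
    also have "lam * (K * hk k lam m) = lam * K * hk k lam m" by simp
    finally show ?thesis using hpos[of m] by simp
  qed
  have incr: "real n < lam * K - K \<or> (k \<ge> 2 \<and> n \<ge> 1 \<and> real n \<le> lam * K - K) \<Longrightarrow> hk k lam n < hk k lam (Suc n)" for n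
  proof -
    assume c: "real n < lam * K - K \<or> (k \<ge> 2 \<and> n \<ge> 1 \<and> real n \<le> lam * K - K)"
    have F: "\<And>y. Fk k lam y = (if y < 0 then 0 else hk k lam (nat y))" by (simp add: Fk_def)
    have R: "\<And>x. real x * hk k lam x = lam * (\<Sum>j=1..k. real j * Fk k lam (int x - int j))"
      by (rule recur)
    show ?thesis
      by (rule incr_abs[where F="Fk k lam" and h="hk k lam" and K=K and lam=lam and k=k, OF F R hpos k1 lam K_def c])
  qed
  have lo: "lam * K - K \<le> real m"
  proof (rule ccontr)
    assume "\<not> lam * K - K \<le> real m"
    then have "hk k lam m < hk k lam (Suc m)" using incr by auto
    then show False using hmode[of "Suc m"] by simp
  qed
  have lo2: "k \<ge> 2 \<Longrightarrow> lam * K < real m + K"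
  proof (rule ccontr)
    assume k2: "k \<ge> 2" and "\<not> lam * K < real m + K"
    then have le: "real m \<le> lam * K - K" by simp
    show False
    proof (cases "m = 0")
      case False
      then have "hk k lam m < hk k lam (Suc m)" using incr[of m] le k2 by auto
      then show False using hmode[of "Suc m"] by simp
    next
      case True
      then have "0 \<le> (lam - 1) * K" using le by (simp add: algebra_simps)
      then have lam1: "lam \<ge> 1" using Kpos by (simp add: zero_le_mult_iff)
      have fin: "finite {1..k}" by simp
      have "real 1 * hk k lam 1 = lam * (\<Sum>j=1..k. real j * Fk k lam (int 1 - int j))" by (rule recur)
      also have "\<dots> \<ge> lam * (\<Sum>j\<in>{1}. real j * Fk k lam (int 1 - int j))"
        using lam Fnn k1 by (intro mult_left_mono sum_mono2) auto
      finally have h1: "hk k lam 1 \<ge> lam * hk k lam 0" by (simp add: Fk_def)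
      have "real 2 * hk k lam 2 = lam * (\<Sum>j=1..k. real j * Fk k lam (int 2 - int j))" by (rule recur)
      also have "\<dots> \<ge> lam * (\<Sum>j\<in>{1,2}. real j * Fk k lam (int 2 - int j))"
        using lam Fnn k2 by (intro mult_left_mono sum_mono2) auto
      finally have h2: "2 * hk k lam 2 \<ge> lam * (hk k lam 1 + 2 * hk k lam 0)" by (simp add: Fk_def)
      have "lam * hk k lam 0 \<ge> hk k lam 0" using lam1 hpos[of 0] by simp
      then have "hk k lam 1 \<ge> hk k lam 0" using h1 by linarith
      then have "lam * (hk k lam 1 + 2 * hk k lam 0) \<ge> 3 * hk k lam 0"
      proof -
        have "hk k lam 1 + 2 * hk k lam 0 \<le> lam * (hk k lam 1 + 2 * hk k lam 0)"
          using mult_right_mono[of 1 lam "hk k lam 1 + 2 * hk k lam 0"] lam1 hpos[of 0] hpos[of 1] by simp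
        then show ?thesis using \<open>hk k lam 1 \<ge> hk k lam 0\<close> by linarith
      qed
      then have "hk k lam 2 > hk k lam 0" using h2 hpos[of 0] by linarith
      then show False using hmode[of 2] True by simp
    qed
  qed
  have fl: "real_of_int \<lfloor>lam * K\<rfloor> \<le> lam * K" by (rule of_int_floor_le)
  have A: "\<lfloor>lam * K\<rfloor> - int (k * (k + 1) div 2) + 1 - (if k = 1 then 1 else 0) \<le> int m"
  proof (cases "k = 1")
    case True
    then have "K = 1" by (simp add: K_def)
    then have "real_of_int \<lfloor>lam * K\<rfloor> \<le> real m + 1" using fl lo unfolding \<open>K = 1\<close> by linarith
    then have "\<lfloor>lam * K\<rfloor> \<le> int m + 1" by linarith
    then show ?thesis using True by simp
  next
    case False
    then have "lam * K < real m + K" using lo2 k1 by simp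
    then have "real_of_int \<lfloor>lam * K\<rfloor> < real m + real (k * (k + 1) div 2)" using fl Kint by linarith
    then have "\<lfloor>lam * K\<rfloor> < int m + int (k * (k + 1) div 2)" by linarith
    then show ?thesis using False by simp
  qed
  have B: "int m \<le> \<lfloor>lam * K\<rfloor>" using up by (simp add: le_floor_iff)
  show ?thesis using A B unfolding lamK by simp
qed

end
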